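(* Let $\mathcal C_1$ and $\mathcal C_2$ be $C^2$ convex curves with the same endpoints and with $\mathcal C_1$ contained in the convex hull of $\mathcal C_2$. Assume the total curvature of $\mathcal C_2$ satisfies $\int_{\mathcal C_2}\kappa\,ds\le\pi$. Then $$\max_{P\in\mathcal C_2}\kappa_{\mathcal C_2}(P)\ge\min_{Q\in\mathcal C_1}\kappa_{\mathcal C_1}(Q).$$
   Context: Curves are of class $C^2$ with nonvanishing first and second derivative vectors, oriented so that the curvature is positive; $\kappa_{\mathcal C}$ denotes the curvature of $\mathcal C$, $s$ arclength, and $\int_{\mathcal C}\kappa\,ds$ the total curvature (total change of the tangent angle). *)

theory Defs
  imports "HOL-Analysis.Analysis"
begin

definition vel :: "(real \<Rightarrow> real^2) \<Rightarrow> real \<Rightarrow> real^2" where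
  "vel \<gamma> t = vector_derivative \<gamma> (at t within {0..1})"

definition acc :: "(real \<Rightarrow> real^2) \<Rightarrow> real \<Rightarrow> real^2" where
  "acc \<gamma> t = vector_derivative (vel \<gamma>) (at t within {0..1})"

definition regular_C2_curve :: "(real \<Rightarrow> real^2) \<Rightarrow> bool" where
  "regular_C2_curve \<gamma> \<longleftrightarrow>
     (\<forall>t\<in>{0..1}. (\<gamma> has_vector_derivative vel \<gamma> t) (at t within {0..1}) \<and>
                 (vel \<gamma> has_vector_derivative acc \<gamma> t) (at t within {0..1}) \<and>
                 vel \<gamma> t \<noteq> 0 \<and> acc \<gamma> t \<noteq> 0) \<and>
     continuous_on {0..1} (acc \<gamma>)"

definition curvature :: "(real \<Rightarrow> real^2) \<Rightarrow> real \<Rightarrow> real" where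
  "curvature \<gamma> t =
     (vel \<gamma> t $ 1 * acc \<gamma> t $ 2 - vel \<gamma> t $ 2 * acc \<gamma> t $ 1) / norm (vel \<gamma> t) ^ 3"

definition total_curvature :: "(real \<Rightarrow> real^2) \<Rightarrow> real" where
  "total_curvature \<gamma> = integral {0..1} (\<lambda>t. curvature \<gamma> t * norm (vel \<gamma> t))"

text \<open>A convex curve (arc): a simple arc lying on the boundary of its convex hull,
  here additionally C^2, regular, with positive curvature (standing orientation convention).\<close>
definition convex_curve :: "(real \<Rightarrow> real^2) \<Rightarrow> bool" where
  "convex_curve \<gamma> \<longleftrightarrow> regular_C2_curve \<gamma> \<and> arc \<gamma> \<and>
     path_image \<gamma> \<subseteq> frontier (convex hull (path_image \<gamma>)) \<and>
     (\<forall>t\<in>{0..1}. curvature \<gamma> t > 0)"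

end

theory Submission
  imports Defs
begin


lemma comp_deriv:
  assumes "(f has_vector_derivative f') (at t within S)"
  shows "((\<lambda>u. f u $ i) has_real_derivative f' $ i) (at t within S)"
  using bounded_linear.has_vector_derivative[OF bounded_linear_vec_nth assms]
  by (simp add: has_real_derivative_iff_has_vector_derivative)

lemma mono_deriv:
  fixes f :: "real \<Rightarrow> real"
  assumes "a \<le> b" "{a..b} \<subseteq> S" "\<And>x. x \<in> {a..b} \<Longrightarrow> (f has_real_derivative f' x) (at x within S)"
    "\<And>x. x \<in> {a..b} \<Longrightarrow> f' x \<ge> 0"
  shows "f a \<le> f b"
proof -
  have "(f' has_integral (f b - f a)) {a..b}"
    by (rule fundamental_theorem_of_calculus[OF assms(1)])
      (use assms(2,3) in \<open>auto simp: has_real_derivative_iff_has_vector_derivative[symmetric] intro: DERIV_subset\<close>)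
  then have "0 \<le> f b - f a" by (rule has_integral_nonneg) (use assms(4) in auto)
  thus ?thesis by simp
qed

lemma const_deriv:
  fixes f :: "real \<Rightarrow> real"
  assumes "a \<le> b" "{a..b} \<subseteq> S" "\<And>x. x \<in> {a..b} \<Longrightarrow> (f has_real_derivative 0) (at x within S)"
  shows "f a = f b"
proof -
  have "f a \<le> f b" by (rule mono_deriv[OF assms(1,2) assms(3)]) auto
  moreover have "- f a \<le> - f b"
    by (rule mono_deriv[OF assms(1,2), of "\<lambda>x. - f x" "\<lambda>x. 0"]) (auto intro!: derivative_eq_intros assms(3))
  ultimately show ?thesis by simp
qed

lemma min_deriv_right:
  fixes f :: "real \<Rightarrow> real"
  assumes "(f has_real_derivative l) (at t within {0..1})" "0 \<le> t" "t < 1"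
    "\<And>u. u \<in> {0..1} \<Longrightarrow> f t \<le> f u"
  shows "l \<ge> 0"
proof (rule ccontr)
  assume "\<not> l \<ge> 0"
  then obtain d where d: "d > 0" "\<And>h. h > 0 \<Longrightarrow> t + h \<in> {0..1} \<Longrightarrow> h < d \<Longrightarrow> f t > f (t + h)"
    using has_real_derivative_neg_dec_right[OF assms(1)] by force
  define h where "h = min (d/2) (1 - t)"
  have "h > 0" "h < d" "t + h \<in> {0..1}" using d assms(2,3) by (auto simp: h_def)
  then show False using d(2)[of h] assms(4)[of "t+h"] by force
qed

lemma min_deriv_left:
  fixes f :: "real \<Rightarrow> real"
  assumes "(f has_real_derivative l) (at t within {0..1})" "0 < t" "t \<le> 1"
    "\<And>u. u \<in> {0..1} \<Longrightarrow> f t \<le> f u"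
  shows "l \<le> 0"
proof (rule ccontr)
  assume "\<not> l \<le> 0"
  then obtain d where d: "d > 0" "\<And>h. h > 0 \<Longrightarrow> t - h \<in> {0..1} \<Longrightarrow> h < d \<Longrightarrow> f (t - h) < f t"
    using has_real_derivative_pos_inc_left[OF assms(1)] by force
  define h where "h = min (d/2) t"
  have "h > 0" "h < d" "t - h \<in> {0..1}" using d assms(2,3) by (auto simp: h_def)
  then show False using d(2)[of h] assms(4)[of "t-h"] by force
qed

lemma inner2: "(a::real^2) \<bullet> b = a$1 * b$1 + a$2 * b$2"
  by (simp add: inner_vec_def sum_2)

lemma norm2: "norm (a::real^2) = sqrt ((a$1)^2 + (a$2)^2)"
  by (simp add: norm_eq_sqrt_inner inner2 power2_eq_square)

lemma support_exists:
  fixes S :: "'a::euclidean_space set"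
  assumes "convex S" "x \<in> S" "x \<in> frontier S"
  obtains a where "a \<noteq> 0" "\<And>y. y \<in> S \<Longrightarrow> a \<bullet> x \<le> a \<bullet> y"
proof (cases "aff_dim S = int DIM('a)")
  case True
  then have "rel_interior S = interior S" by (rule interior_rel_interior)
  then have "x \<notin> rel_interior S" using assms(3) by (simp add: frontier_def)
  moreover have "x \<in> closure S" using assms(2) closure_subset by auto
  ultimately obtain a where "a \<noteq> 0" "\<And>y. y \<in> closure S \<Longrightarrow> a \<bullet> x \<le> a \<bullet> y"
    using supporting_hyperplane_relative_frontier[OF assms(1)] by metis
  then show ?thesis using that closure_subset by (meson subsetD)
next
  case False
  then have "aff_dim S < DIM('a)" using aff_dim_le_DIM[of S] by linarith
  then obtain a b where "a \<noteq> 0" "S \<subseteq> {x. a \<bullet> x = b}" by (rule aff_lowdim_subset_hyperplane)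
  then show ?thesis using that assms(2) by (metis (mono_tags, lifting) mem_Collect_eq order_refl subsetD)
qed


definition cr :: "real \<Rightarrow> real^2 \<Rightarrow> real^2 \<Rightarrow> real" where
  "cr a P Q = cos a * (Q$2 - P$2) - sin a * (Q$1 - P$1)"
definition dt :: "real \<Rightarrow> real^2 \<Rightarrow> real^2 \<Rightarrow> real" where
  "dt a P Q = cos a * (Q$1 - P$1) + sin a * (Q$2 - P$2)"

lemma cos_shift: "cos (x + 2 * pi * of_int n) = cos x" by (simp add: cos_add)
lemma sin_shift: "sin (x + 2 * pi * of_int n) = sin x" by (simp add: sin_add)

lemma cr_swap: "cr a Q P = - cr a P Q" by (simp add: cr_def algebra_simps)
lemma dt_swap: "dt a Q P = - dt a P Q" by (simp add: dt_def algebra_simps)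
lemma cr_self: "cr a P P = 0" by (simp add: cr_def)

lemma recon1: "Q$1 - P$1 = cos a * dt a P Q - sin a * cr a P Q"
proof -
  have "cos a * dt a P Q - sin a * cr a P Q = (Q$1 - P$1) * ((sin a)^2 + (cos a)^2)"
    by (simp add: dt_def cr_def algebra_simps power2_eq_square del: sin_cos_squared_add sin_cos_squared_add2 sin_cos_squared_add3)
  then show ?thesis by simp
qed

lemma recon2: "Q$2 - P$2 = sin a * dt a P Q + cos a * cr a P Q"
proof -
  have "sin a * dt a P Q + cos a * cr a P Q = (Q$2 - P$2) * ((sin a)^2 + (cos a)^2)"
    by (simp add: dt_def cr_def algebra_simps power2_eq_square del: sin_cos_squared_add sin_cos_squared_add2 sin_cos_squared_add3)
  then show ?thesis by simp
qed

lemma recon_eq: "cr a P Q = 0 \<Longrightarrow> dt a P Q = 0 \<Longrightarrow> Q = P"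
  using recon1[of Q P a] recon2[of Q P a] by (simp add: vec_eq_iff forall_2)

locale ccurve =
  fixes g :: "real \<Rightarrow> real^2"
  assumes cv: "convex_curve g"
begin

definition "v1 t = vel g t $ 1"
definition "v2 t = vel g t $ 2"
definition "a1 t = acc g t $ 1"
definition "a2 t = acc g t $ 2"
definition "sp t = sqrt ((v1 t)^2 + (v2 t)^2)"
definition "om t = (v1 t * a2 t - v2 t * a1 t) / (sp t)^2"

lemma reg: "regular_C2_curve g" using cv by (simp add: convex_curve_def)
lemma arc: "arc g" using cv by (simp add: convex_curve_def)
lemma front: "path_image g \<subseteq> frontier (convex hull (path_image g))" using cv by (simp add: convex_curve_def)
lemma kpos: "t \<in> {0..1} \<Longrightarrow> curvature g t > 0" using cv by (simp add: convex_curve_def)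

lemma dg: "t \<in> {0..1} \<Longrightarrow> (g has_vector_derivative vel g t) (at t within {0..1})"
  using reg by (simp add: regular_C2_curve_def)
lemma dv: "t \<in> {0..1} \<Longrightarrow> (vel g has_vector_derivative acc g t) (at t within {0..1})"
  using reg by (simp add: regular_C2_curve_def)
lemma vnz: "t \<in> {0..1} \<Longrightarrow> vel g t \<noteq> 0"
  using reg by (simp add: regular_C2_curve_def)
lemma cont_acc: "continuous_on {0..1} (acc g)"
  using reg by (simp add: regular_C2_curve_def)
lemma cont_vel: "continuous_on {0..1} (vel g)"
  using dv continuous_on_eq_continuous_within has_vector_derivative_continuous by blast
lemma cont_g: "continuous_on {0..1} g"
  using dg continuous_on_eq_continuous_within has_vector_derivative_continuous by blast

lemma dX: "t \<in> {0..1} \<Longrightarrow> ((\<lambda>u. g u $ 1) has_real_derivative v1 t) (at t within {0..1})"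
  using comp_deriv[OF dg] by (simp add: v1_def)
lemma dY: "t \<in> {0..1} \<Longrightarrow> ((\<lambda>u. g u $ 2) has_real_derivative v2 t) (at t within {0..1})"
  using comp_deriv[OF dg] by (simp add: v2_def)
lemma dv1: "t \<in> {0..1} \<Longrightarrow> (v1 has_real_derivative a1 t) (at t within {0..1})"
  using comp_deriv[OF dv] by (simp add: v1_def[abs_def] a1_def)
lemma dv2: "t \<in> {0..1} \<Longrightarrow> (v2 has_real_derivative a2 t) (at t within {0..1})"
  using comp_deriv[OF dv] by (simp add: v2_def[abs_def] a2_def)

lemma norm_vel: "norm (vel g t) = sp t" by (simp add: norm2 sp_def v1_def v2_def)
lemma sp_pos: "t \<in> {0..1} \<Longrightarrow> sp t > 0" using vnz norm_vel by (metis zero_less_norm_iff)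
lemma sp_sq: "(sp t)^2 = (v1 t)^2 + (v2 t)^2" by (simp add: sp_def)

lemma curv_eq: "curvature g t = (v1 t * a2 t - v2 t * a1 t) / (sp t)^3"
  by (simp add: curvature_def norm_vel v1_def v2_def a1_def a2_def)
lemma om_eq: "t \<in> {0..1} \<Longrightarrow> om t = curvature g t * sp t"
  using sp_pos[of t] by (simp add: curv_eq om_def field_simps power2_eq_square power3_eq_cube)
lemma om_pos: "t \<in> {0..1} \<Longrightarrow> om t > 0"
  using om_eq kpos sp_pos by simp

lemma cont_v1: "continuous_on {0..1} v1" unfolding v1_def[abs_def] by (intro continuous_intros cont_vel)
lemma cont_v2: "continuous_on {0..1} v2" unfolding v2_def[abs_def] by (intro continuous_intros cont_vel)
lemma cont_a1: "continuous_on {0..1} a1" unfolding a1_def[abs_def] by (intro continuous_intros cont_acc)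
lemma cont_a2: "continuous_on {0..1} a2" unfolding a2_def[abs_def] by (intro continuous_intros cont_acc)
lemma cont_sp: "continuous_on {0..1} sp" unfolding sp_def[abs_def] by (intro continuous_intros cont_v1 cont_v2)
lemma cont_om: "continuous_on {0..1} om"
  unfolding om_def[abs_def]
  by (intro continuous_intros cont_v1 cont_v2 cont_a1 cont_a2 cont_sp) (fastforce dest: sp_pos)

lemma tc: "total_curvature g = integral {0..1} om"
  unfolding total_curvature_def by (rule integral_cong) (simp add: om_eq norm_vel)

lemma dsp: "t \<in> {0..1} \<Longrightarrow> (sp has_real_derivative (v1 t * a1 t + v2 t * a2 t) / sp t) (at t within {0..1})"
proof -
  assume t: "t \<in> {0..1}"
  have p: "sp t > 0" by (rule sp_pos[OF t])
  have pos: "(v1 t)^2 + (v2 t)^2 > 0" using p sp_sq[of t] by (metis zero_less_power)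
  have h: "((\<lambda>u. (v1 u)^2 + (v2 u)^2) has_real_derivative
        of_nat 2 * (a1 t * v1 t ^ (2 - Suc 0)) + of_nat 2 * (a2 t * v2 t ^ (2 - Suc 0))) (at t within {0..1})"
    by (rule DERIV_add[OF DERIV_power[OF dv1[OF t]] DERIV_power[OF dv2[OF t]]])
  have "((\<lambda>u. sqrt ((v1 u)^2 + (v2 u)^2)) has_real_derivative
        inverse (sqrt ((v1 t)^2 + (v2 t)^2)) / 2 * (of_nat 2 * (a1 t * v1 t ^ (2 - Suc 0)) + of_nat 2 * (a2 t * v2 t ^ (2 - Suc 0)))) (at t within {0..1})"
    by (rule DERIV_chain2[OF DERIV_real_sqrt[OF pos] h])
  then show ?thesis unfolding sp_def[symmetric, abs_def]
  proof (rule DERIV_cong)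
    show "inverse (sp t) / 2 * (of_nat 2 * (a1 t * v1 t ^ (2 - Suc 0)) + of_nat 2 * (a2 t * v2 t ^ (2 - Suc 0)))
        = (v1 t * a1 t + v2 t * a2 t) / sp t"
      using p by (simp add: field_simps)
  qed
qed

lemma dc: "t \<in> {0..1} \<Longrightarrow> ((\<lambda>u. v1 u / sp u) has_real_derivative - (v2 t / sp t) * om t) (at t within {0..1})"
proof -
  assume t: "t \<in> {0..1}"
  have p: "sp t > 0" by (rule sp_pos[OF t])
  have "((\<lambda>u. v1 u / sp u) has_real_derivative (a1 t * sp t - v1 t * ((v1 t * a1 t + v2 t * a2 t) / sp t)) / (sp t * sp t)) (at t within {0..1})"
    by (rule DERIV_divide[OF dv1[OF t] dsp[OF t]]) (use p in simp)
  then show ?thesis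
  proof (rule DERIV_cong)
    have e: "sp t * sp t = (v1 t)^2 + (v2 t)^2" using sp_sq[of t] by (simp add: power2_eq_square)
    have l: "(a1 t * sp t - v1 t * ((v1 t * a1 t + v2 t * a2 t) / sp t)) / (sp t * sp t)
        = (a1 t * (sp t)^2 - v1 t * (v1 t * a1 t + v2 t * a2 t)) / (sp t)^3"
      using p by (simp add: field_simps power2_eq_square power3_eq_cube)
    have r: "- (v2 t / sp t) * om t = (- v2 t * (v1 t * a2 t - v2 t * a1 t)) / (sp t)^3"
      using p unfolding om_def by (simp add: field_simps power2_eq_square power3_eq_cube)
    have m: "a1 t * (sp t)^2 - v1 t * (v1 t * a1 t + v2 t * a2 t) = (- v2 t * (v1 t * a2 t - v2 t * a1 t))"
      unfolding sp_sq by (simp add: algebra_simps power2_eq_square)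
    show "(a1 t * sp t - v1 t * ((v1 t * a1 t + v2 t * a2 t) / sp t)) / (sp t * sp t) = - (v2 t / sp t) * om t"
      using l r m by simp
  qed
qed

lemma ds: "t \<in> {0..1} \<Longrightarrow> ((\<lambda>u. v2 u / sp u) has_real_derivative (v1 t / sp t) * om t) (at t within {0..1})"
proof -
  assume t: "t \<in> {0..1}"
  have p: "sp t > 0" by (rule sp_pos[OF t])
  have "((\<lambda>u. v2 u / sp u) has_real_derivative (a2 t * sp t - v2 t * ((v1 t * a1 t + v2 t * a2 t) / sp t)) / (sp t * sp t)) (at t within {0..1})"
    by (rule DERIV_divide[OF dv2[OF t] dsp[OF t]]) (use p in simp)
  then show ?thesis
  proof (rule DERIV_cong)
    have e: "sp t * sp t = (v1 t)^2 + (v2 t)^2" using sp_sq[of t] by (simp add: power2_eq_square)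
    have l: "(a2 t * sp t - v2 t * ((v1 t * a1 t + v2 t * a2 t) / sp t)) / (sp t * sp t)
        = (a2 t * (sp t)^2 - v2 t * (v1 t * a1 t + v2 t * a2 t)) / (sp t)^3"
      using p by (simp add: field_simps power2_eq_square power3_eq_cube)
    have r: "(v1 t / sp t) * om t = (v1 t * (v1 t * a2 t - v2 t * a1 t)) / (sp t)^3"
      using p unfolding om_def by (simp add: field_simps power2_eq_square power3_eq_cube)
    have m: "a2 t * (sp t)^2 - v2 t * (v1 t * a1 t + v2 t * a2 t) = (v1 t * (v1 t * a2 t - v2 t * a1 t))"
      unfolding sp_sq by (simp add: algebra_simps power2_eq_square)
    show "(a2 t * sp t - v2 t * ((v1 t * a1 t + v2 t * a2 t) / sp t)) / (sp t * sp t) = (v1 t / sp t) * om t"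
      using l r m by simp
  qed
qed

definition th0 where "th0 = (SOME th. cos th = v1 0 / sp 0 \<and> sin th = v2 0 / sp 0)"

lemma th0: "cos th0 = v1 0 / sp 0 \<and> sin th0 = v2 0 / sp 0"
proof -
  have p: "sp 0 > 0" using sp_pos by simp
  have "(v1 0 / sp 0)^2 + (v2 0 / sp 0)^2 = ((v1 0)^2 + (v2 0)^2) / (sp 0)^2"
    by (simp add: power_divide add_divide_distrib)
  also have "\<dots> = 1" using p by (simp add: sp_sq[symmetric])
  finally have "(v1 0 / sp 0)^2 + (v2 0 / sp 0)^2 = 1" .
  then obtain th where "v1 0 / sp 0 = cos th" "v2 0 / sp 0 = sin th" by (rule sincos_total_2pi)
  then have "\<exists>th. cos th = v1 0 / sp 0 \<and> sin th = v2 0 / sp 0" by metis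
  then show ?thesis unfolding th0_def by (rule someI_ex)
qed

definition phi where "phi t = th0 + integral {0..t} om"

lemma dphi: "t \<in> {0..1} \<Longrightarrow> (phi has_real_derivative om t) (at t within {0..1})"
  unfolding phi_def[abs_def]
  by (rule derivative_eq_intros integral_has_real_derivative[OF cont_om] | simp)+

lemma cont_phi: "continuous_on {0..1} phi"
  using dphi continuous_on_eq_continuous_within DERIV_continuous by blast

lemma phi0: "phi 0 = th0" by (simp add: phi_def)
lemma phi_tc: "phi 1 - phi 0 = total_curvature g" by (simp add: phi_def tc)

lemma lift: "t \<in> {0..1} \<Longrightarrow> v1 t = sp t * cos (phi t) \<and> v2 t = sp t * sin (phi t)"
proof -
  assume t: "t \<in> {0..1}"
  define cc where "cc = (\<lambda>u. v1 u / sp u)"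
  define ss where "ss = (\<lambda>u. v2 u / sp u)"
  have dcc: "(cc has_real_derivative - ss u * om u) (at u within {0..1})" if u: "u \<in> {0..1}" for u
    using dc[OF u] by (simp add: cc_def ss_def)
  have dss: "(ss has_real_derivative cc u * om u) (at u within {0..1})" if u: "u \<in> {0..1}" for u
    using ds[OF u] by (simp add: cc_def ss_def)
  define P where "P u = cc u * cos (phi u) + ss u * sin (phi u)" for u
  define Q where "Q u = - cc u * sin (phi u) + ss u * cos (phi u)" for u
  have dP: "(P has_real_derivative 0) (at u within {0..1})" if u: "u \<in> {0..1}" for u
    unfolding P_def[abs_def]
    apply (rule derivative_eq_intros dcc[OF u] dss[OF u] dphi[OF u] refl)+
    by (simp add: algebra_simps)
  have dQ: "(Q has_real_derivative 0) (at u within {0..1})" if u: "u \<in> {0..1}" for u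
    unfolding Q_def[abs_def]
    apply (rule derivative_eq_intros dcc[OF u] dss[OF u] dphi[OF u] refl)+
    by (simp add: algebra_simps)
  have "P 0 = P t" by (rule const_deriv[of 0 t "{0..1}"]) (use t dP in auto)
  moreover have "P 0 = 1"
  proof -
    have "P 0 = cos th0 * cos th0 + sin th0 * sin th0" using th0 by (simp add: P_def cc_def ss_def phi0)
    then show ?thesis by (simp flip: power2_eq_square)
  qed
  moreover have "Q 0 = Q t" by (rule const_deriv[of 0 t "{0..1}"]) (use t dQ in auto)
  moreover have "Q 0 = 0" using th0 by (simp add: Q_def cc_def ss_def phi0)
  ultimately have e: "P t = 1" "Q t = 0" by auto
  have p: "sp t > 0" using sp_pos t by simp
  have "cc t = P t * cos (phi t) - Q t * sin (phi t)"
    unfolding P_def Q_def by (simp add: algebra_simps flip: power2_eq_square)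
      (metis distrib_left mult.right_neutral sin_cos_squared_add2)
  moreover have "ss t = P t * sin (phi t) + Q t * cos (phi t)"
    unfolding P_def Q_def by (simp add: algebra_simps flip: power2_eq_square)
      (metis distrib_left mult.right_neutral sin_cos_squared_add2)
  ultimately have "cc t = cos (phi t)" "ss t = sin (phi t)" using e by auto
  moreover have "v1 t = sp t * cc t" "v2 t = sp t * ss t" using p by (simp_all add: cc_def ss_def)
  ultimately show ?thesis by simp
qed

lemma phi_strict: "a \<in> {0..1} \<Longrightarrow> b \<in> {0..1} \<Longrightarrow> a < b \<Longrightarrow> phi a < phi b"
proof -
  assume ab: "a \<in> {0..1}" "b \<in> {0..1}" "a < b"
  obtain x0 where x0: "x0 \<in> {0..1}" "\<And>y. y \<in> {0..1} \<Longrightarrow> om x0 \<le> om y"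
    using continuous_attains_inf[OF compact_Icc _ cont_om] by fastforce
  define c where "c = om x0"
  have c: "c > 0" using om_pos x0 c_def by simp
  have d: "((\<lambda>u. phi u - c * u) has_real_derivative om u - c * 1) (at u within {0..1})"
    if u: "u \<in> {a..b}" for u
  proof -
    have u': "u \<in> {0..1}" using u ab by auto
    show ?thesis by (rule derivative_eq_intros dphi[OF u'] refl | simp)+
  qed
  have "phi a - c * a \<le> phi b - c * b"
  proof (rule mono_deriv[of a b "{0..1}" _ "\<lambda>u. om u - c * 1"])
    show "a \<le> b" using ab by simp
    show "{a..b} \<subseteq> {0..1}" using ab by auto
    show "((\<lambda>u. phi u - c * u) has_real_derivative om x - c * 1) (at x within {0..1})" if "x \<in> {a..b}" for x
      using d that by blast
    show "0 \<le> om x - c * 1" if "x \<in> {a..b}" for x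
      using x0(2)[of x] that ab unfolding c_def by auto
  qed
  moreover have "c * a < c * b" using c ab by simp
  ultimately show ?thesis by linarith
qed

lemma phi_mono: "a \<in> {0..1} \<Longrightarrow> b \<in> {0..1} \<Longrightarrow> a \<le> b \<Longrightarrow> phi a \<le> phi b"
  by (metis less_eq_real_def phi_strict)

lemma dcr: "t \<in> {0..1} \<Longrightarrow> ((\<lambda>u. cr a P (g u)) has_real_derivative sp t * sin (phi t - a)) (at t within {0..1})"
proof -
  assume t: "t \<in> {0..1}"
  have "((\<lambda>u. cr a P (g u)) has_real_derivative cos a * (v2 t - 0) - sin a * (v1 t - 0)) (at t within {0..1})"
    unfolding cr_def by (intro DERIV_diff DERIV_cmult dY[OF t] dX[OF t] DERIV_const)
  then show ?thesis by (rule DERIV_cong) (use lift[OF t] in \<open>simp add: sin_diff algebra_simps\<close>)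
qed

lemma ddt: "t \<in> {0..1} \<Longrightarrow> ((\<lambda>u. dt a P (g u)) has_real_derivative sp t * cos (phi t - a)) (at t within {0..1})"
proof -
  assume t: "t \<in> {0..1}"
  have "((\<lambda>u. dt a P (g u)) has_real_derivative cos a * (v1 t - 0) + sin a * (v2 t - 0)) (at t within {0..1})"
    unfolding dt_def by (intro DERIV_add DERIV_diff DERIV_cmult dY[OF t] dX[OF t] DERIV_const)
  then show ?thesis by (rule DERIV_cong) (use lift[OF t] in \<open>simp add: cos_diff algebra_simps\<close>)
qed

lemma dk: "t \<in> {0..1} \<Longrightarrow> ((\<lambda>u. cr (phi u) (g u) P) has_real_derivative - om t * dt (phi t) (g t) P) (at t within {0..1})"
proof -
  assume t: "t \<in> {0..1}"
  have c: "((\<lambda>u. cos (phi u)) has_real_derivative - sin (phi t) * om t) (at t within {0..1})"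
    by (rule DERIV_chain2[OF DERIV_cos dphi[OF t]])
  have si: "((\<lambda>u. sin (phi u)) has_real_derivative cos (phi t) * om t) (at t within {0..1})"
    by (rule DERIV_chain2[OF DERIV_sin dphi[OF t]])
  have "((\<lambda>u. cr (phi u) (g u) P) has_real_derivative
     (- sin (phi t) * om t * (P $ 2 - g t $ 2) + (0 - v2 t) * cos (phi t)) -
     (cos (phi t) * om t * (P $ 1 - g t $ 1) + (0 - v1 t) * sin (phi t))) (at t within {0..1})"
    unfolding cr_def by (intro DERIV_diff DERIV_mult c si dY[OF t] dX[OF t] DERIV_const)
  then show ?thesis by (rule DERIV_cong) (use lift[OF t] in \<open>simp add: dt_def algebra_simps\<close>)
qed

lemma support_int: assumes t: "0 < t" "t < 1" and s: "s \<in> {0..1}"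
  shows "cr (phi t) (g t) (g s) \<ge> 0"
proof -
  have tI: "t \<in> {0..1}" using t by auto
  define K where "K = convex hull (path_image g)"
  have gK: "g u \<in> K" if "u \<in> {0..1}" for u
    using that hull_subset[of "path_image g" convex] unfolding K_def path_image_def by blast
  have "g t \<in> frontier K" using front tI unfolding K_def path_image_def by blast
  moreover have cK: "convex K" unfolding K_def by (rule convex_convex_hull)
  ultimately obtain n where n: "n \<noteq> 0" "\<And>y. y \<in> K \<Longrightarrow> n \<bullet> g t \<le> n \<bullet> y"
    using support_exists[OF cK gK[OF tI]] by blast
  define h where "h u = n$1 * g u $ 1 + n$2 * g u $ 2" for u
  have hmin: "h t \<le> h u" if "u \<in> {0..1}" for u
    using n(2)[OF gK[OF that]] unfolding h_def inner2 .
  have dh: "(h has_real_derivative n$1 * v1 t + n$2 * v2 t) (at t within {0..1})"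
    unfolding h_def[abs_def] by (intro DERIV_add DERIV_cmult dX[OF tI] dY[OF tI])
  have "n$1 * v1 t + n$2 * v2 t \<ge> 0" by (rule min_deriv_right[OF dh]) (use t hmin in auto)
  moreover have "n$1 * v1 t + n$2 * v2 t \<le> 0" by (rule min_deriv_left[OF dh]) (use t hmin in auto)
  ultimately have "n$1 * v1 t + n$2 * v2 t = 0" by linarith
  then have "sp t * (n$1 * cos (phi t) + n$2 * sin (phi t)) = 0" using lift[OF tI] by (simp add: algebra_simps)
  then have c0: "n$1 * cos (phi t) + n$2 * sin (phi t) = 0" using sp_pos[OF tI] by simp
  define lam where "lam = - n$1 * sin (phi t) + n$2 * cos (phi t)"
  have n1: "n$1 = - lam * sin (phi t)"
  proof -
    have "n$1 = n$1 * ((sin (phi t))^2 + (cos (phi t))^2)" by simp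
    also have "\<dots> = n$1 * (sin (phi t))^2 + cos (phi t) * (n$1 * cos (phi t))"
      by (simp add: algebra_simps power2_eq_square del: sin_cos_squared_add sin_cos_squared_add2 sin_cos_squared_add3)
    also have "n$1 * cos (phi t) = - (n$2 * sin (phi t))" using c0 by linarith
    also have "n$1 * (sin (phi t))^2 + cos (phi t) * (- (n$2 * sin (phi t))) = - lam * sin (phi t)"
      by (simp add: lam_def algebra_simps power2_eq_square)
    finally show ?thesis .
  qed
  have n2: "n$2 = lam * cos (phi t)"
  proof -
    have "n$2 = n$2 * ((sin (phi t))^2 + (cos (phi t))^2)" by simp
    also have "\<dots> = n$2 * (cos (phi t))^2 + sin (phi t) * (n$2 * sin (phi t))"
      by (simp add: algebra_simps power2_eq_square del: sin_cos_squared_add sin_cos_squared_add2 sin_cos_squared_add3)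
    also have "n$2 * sin (phi t) = - (n$1 * cos (phi t))" using c0 by linarith
    also have "n$2 * (cos (phi t))^2 + sin (phi t) * (- (n$1 * cos (phi t))) = lam * cos (phi t)"
      by (simp add: lam_def algebra_simps power2_eq_square)
    finally show ?thesis .
  qed
  have lam0: "lam \<noteq> 0"
  proof
    assume "lam = 0"
    then have "n$1 = 0" "n$2 = 0" using n1 n2 by auto
    then have "n = 0" by (simp add: vec_eq_iff forall_2)
    then show False using n(1) by simp
  qed
  define F where "F u = cr (phi t) (g t) (g u)" for u
  have hF: "h u - h t = lam * F u" for u
    unfolding h_def F_def cr_def n1 n2 by (simp add: algebra_simps)
  have lamF: "lam * F u \<ge> 0" if "u \<in> {0..1}" for u using hmin[OF that] hF[of u] by simp
  have "lam > 0"
  proof (rule ccontr)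
    assume "\<not> lam > 0"
    then have lneg: "lam < 0" using lam0 by simp
    have Fle: "F u \<le> 0" if "u \<in> {0..1}" for u
      using lamF[OF that] lneg by (simp add: mult_le_0_iff zero_le_mult_iff)
    have "\<exists>d>0. \<forall>u\<in>{0..1}. dist u t < d \<longrightarrow> dist (phi u) (phi t) < pi"
      using cont_phi tI pi_gt_zero unfolding continuous_on_iff by blast
    then obtain d where d: "d > 0" "\<And>u. u \<in> {0..1} \<Longrightarrow> dist u t < d \<Longrightarrow> dist (phi u) (phi t) < pi"
      by blast
    obtain w where w: "w > 0" "w \<le> d/2" "w \<le> (1 - t)/2"
      using t d by (intro that[of "min d (1 - t) / 2"]) (auto simp: min_def)
    define u1 where "u1 = t + w"
    define m where "m = (t + u1) / 2"
    have u1a: "t < u1" using w unfolding u1_def by auto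
    have u1b: "u1 < 1" using t w unfolding u1_def by auto
    have u1c: "u1 - t < d" using d w unfolding u1_def by auto
    note u1 = u1a u1b u1c
    have mI: "t < m" "m < u1" using u1 by (auto simp: m_def)
    have near: "0 \<le> phi u - phi t \<and> phi u - phi t < pi" if "u \<in> {t..u1}" for u
    proof -
      have uI: "u \<in> {0..1}" using that t u1 by auto
      have "dist u t < d" using that u1 by (auto simp: dist_real_def)
      then have "dist (phi u) (phi t) < pi" using d(2)[OF uI] by simp
      moreover have "phi t \<le> phi u" using phi_mono[OF tI uI] that by auto
      ultimately show ?thesis by (simp add: dist_real_def)
    qed
    have dF: "(F has_real_derivative sp u * sin (phi u - phi t)) (at u within {0..1})" if "u \<in> {0..1}" for u
      unfolding F_def[abs_def] by (rule dcr[OF that])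
    have "F t \<le> F m"
    proof (rule mono_deriv[of t m "{0..1}" F "\<lambda>u. sp u * sin (phi u - phi t)"])
      show "t \<le> m" using mI by simp
      show "{t..m} \<subseteq> {0..1}" using t mI u1 by auto
      show "(F has_real_derivative sp x * sin (phi x - phi t)) (at x within {0..1})" if "x \<in> {t..m}" for x
        using dF that t mI u1 by auto
      show "0 \<le> sp x * sin (phi x - phi t)" if "x \<in> {t..m}" for x
      proof -
        have xI: "x \<in> {0..1}" using that t mI u1 by auto
        have "0 \<le> phi x - phi t" "phi x - phi t < pi" using near[of x] that mI by auto
        then have "sin (phi x - phi t) \<ge> 0" by (intro sin_ge_zero) auto
        then show ?thesis using sp_pos[OF xI] by simp
      qed
    qed
    moreover have "F t = 0" by (simp add: F_def cr_def)
    moreover have mI': "m \<in> {0..1}" using t mI u1 by auto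
    have "0 < phi m - phi t" using phi_strict[OF tI mI'] mI by simp
    moreover have "phi m - phi t < pi" using near[of m] mI by auto
    ultimately have pos: "0 < sp m * sin (phi m - phi t)" "0 \<le> F m"
      using sin_gt_zero sp_pos[OF mI'] by auto
    obtain e where e: "e > 0" "\<And>h. h > 0 \<Longrightarrow> m + h \<in> {0..1} \<Longrightarrow> h < e \<Longrightarrow> F m < F (m + h)"
      using has_real_derivative_pos_inc_right[OF dF[OF mI'] pos(1)] by force
    define hh where "hh = min e (1 - m) / 2"
    have "hh > 0" "hh < e" "m + hh \<in> {0..1}" using e mI u1 t by (auto simp: hh_def min_def field_simps)
    then have "F m < F (m + hh)" using e(2) by blast
    moreover have "F (m + hh) \<le> 0" using Fle \<open>m + hh \<in> {0..1}\<close> by blast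
    ultimately show False using pos(2) by linarith
  qed
  then show ?thesis using lamF[OF s] unfolding F_def by (simp add: zero_le_mult_iff)
qed

lemma cont_cr: "continuous_on {0..1} (\<lambda>t. cr (phi t) (g t) Q)"
  unfolding cr_def by (intro continuous_intros cont_phi cont_g)

lemma support: assumes t: "t \<in> {0..1}" and s: "s \<in> {0..1}"
  shows "cr (phi t) (g t) (g s) \<ge> 0"
proof -
  have "t \<in> closure {0<..<1::real}" using t by simp
  moreover have "continuous_on (closure {0<..<1::real}) (\<lambda>t. cr (phi t) (g t) (g s))"
    using cont_cr by simp
  ultimately show ?thesis
    using continuous_ge_on_closure[of "{0<..<1::real}" "\<lambda>t. cr (phi t) (g t) (g s)" t 0]
      support_int[OF _ _ s] by auto
qed

lemma inj: "u \<in> {0..1} \<Longrightarrow> w \<in> {0..1} \<Longrightarrow> g u = g w \<Longrightarrow> u = w"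
  using arc unfolding arc_def inj_on_def by blast

lemma turn_aux: assumes s: "s \<in> {0..1}" and ph: "phi s = phi 0 + 2 * pi"
  shows "dt (phi 0) (g 0) (g s) \<le> 0 \<and> (s < 1 \<longrightarrow> False)"
proof -
  have I0: "(0::real) \<in> {0..1}" by simp
  have s0: "s \<noteq> 0" using ph pi_gt_zero by auto
  have cs: "cos (phi s) = cos (phi 0)" "sin (phi s) = sin (phi 0)" using ph by simp_all
  have crs: "cr (phi s) P Q = cr (phi 0) P Q" "dt (phi s) P Q = dt (phi 0) P Q" for P Q
    by (simp_all add: cr_def dt_def cs)
  have "cr (phi 0) (g 0) (g s) \<ge> 0" using support[OF I0 s] .
  moreover have "cr (phi s) (g s) (g 0) \<ge> 0" using support[OF s I0] .
  ultimately have c0: "cr (phi 0) (g 0) (g s) = 0" using crs cr_swap by (metis neg_0_le_iff_le order_antisym)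
  define mu where "mu = dt (phi 0) (g 0) (g s)"
  have "- om 0 * dt (phi 0) (g 0) (g s) \<ge> 0"
  proof (rule min_deriv_right[OF dk[OF I0]])
    show "cr (phi 0) (g 0) (g s) \<le> cr (phi u) (g u) (g s)" if "u \<in> {0..1}" for u
      using support[OF that s] c0 by simp
  qed simp_all
  then have mu: "mu \<le> 0" using om_pos[OF I0] unfolding mu_def by (simp add: mult_le_0_iff)
  have "False" if s1: "s < 1"
  proof -
    have "- om s * dt (phi s) (g s) (g 0) \<ge> 0"
    proof (rule min_deriv_right[OF dk[OF s]])
      show "cr (phi s) (g s) (g 0) \<le> cr (phi u) (g u) (g 0)" if "u \<in> {0..1}" for u
        using support[OF that I0] c0 crs cr_swap[of "phi 0" "g s" "g 0"] by simp
    qed (use s s1 in auto)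
    then have "om s * mu \<ge> 0" unfolding mu_def using crs dt_swap[of "phi 0" "g s" "g 0"] by simp
    then have "mu \<ge> 0" using om_pos[OF s] by (simp add: zero_le_mult_iff)
    then have "mu = 0" using mu by simp
    then have "g s = g 0" using recon_eq[OF c0] unfolding mu_def by blast
    then show False using inj[OF s I0] s0 by blast
  qed
  then show ?thesis using mu unfolding mu_def by blast
qed

lemma turn_le: "phi 1 - phi 0 \<le> 2 * pi"
proof (rule ccontr)
  assume "\<not> ?thesis"
  then have lt: "phi 0 + 2 * pi < phi 1" by simp
  obtain s where s: "0 \<le> s" "s \<le> 1" "phi s = phi 0 + 2 * pi"
    using IVT'[of phi 0 "phi 0 + 2 * pi" 1] lt cont_phi pi_gt_zero by force
  have "s \<noteq> 1" using s lt by auto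
  then show False using turn_aux[of s] s by auto
qed

lemma turn_eq: "phi 1 - phi 0 = 2 * pi \<Longrightarrow> dt (phi 0) (g 0) (g 1) \<le> 0"
  using turn_aux[of 1] by simp

lemma phi_pos: "phi 1 - phi 0 > 0" using phi_strict[of 0 1] by simp

end


lemma max_deriv_right:
  fixes f :: "real \<Rightarrow> real"
  assumes "(f has_real_derivative l) (at t within {0..1})" "0 \<le> t" "t < 1"
    "\<And>u. u \<in> {0..1} \<Longrightarrow> f u \<le> f t"
  shows "l \<le> 0"
proof -
  have "- l \<ge> 0"
    by (rule min_deriv_right[of "\<lambda>u. - f u" "- l" t]) (use assms in \<open>auto intro: DERIV_minus\<close>)
  then show ?thesis by simp
qed

lemma max_deriv_left:
  fixes f :: "real \<Rightarrow> real"
  assumes "(f has_real_derivative l) (at t within {0..1})" "0 < t" "t \<le> 1"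
    "\<And>u. u \<in> {0..1} \<Longrightarrow> f u \<le> f t"
  shows "l \<ge> 0"
proof -
  have "- l \<le> 0"
    by (rule min_deriv_left[of "\<lambda>u. - f u" "- l" t]) (use assms in \<open>auto intro: DERIV_minus\<close>)
  then show ?thesis by simp
qed

lemma angle_range:
  assumes ab: "0 < b - a" "b - a \<le> pi" and sa: "sin (x - a) \<ge> 0" and sb: "sin (x - b) \<le> 0"
  shows "\<exists>n::int. a \<le> x + 2 * pi * of_int n \<and> x + 2 * pi * of_int n \<le> b"
proof -
  define z where "z = (x - a) / (2 * pi)"
  define n where "n = - \<lfloor>z\<rfloor>"
  define y where "y = x + 2 * pi * of_int n - a"
  have fl: "of_int \<lfloor>z\<rfloor> \<le> z" "z < of_int \<lfloor>z\<rfloor> + 1" by linarith+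
  have zz: "2 * pi * z = x - a" unfolding z_def by simp
  have yz: "y = 2 * pi * (z - of_int \<lfloor>z\<rfloor>)" unfolding y_def n_def using zz by (simp add: algebra_simps)
  have y0: "0 \<le> y" using fl unfolding yz by simp
  have "z - of_int \<lfloor>z\<rfloor> < 1" using fl by linarith
  then have y2: "y < 2 * pi" unfolding yz by simp
  have sy: "sin y = sin (x - a)" unfolding y_def
    using sin_shift[of "x - a" n] by (simp add: algebra_simps)
  have ypi: "y \<le> pi"
  proof (rule ccontr)
    assume "\<not> y \<le> pi"
    then have "sin (y - pi) > 0" using y2 by (intro sin_gt_zero) auto
    then have "sin y < 0" by (simp add: sin_diff)
    then show False using sa sy by simp
  qed
  have sy2: "sin (y - (b - a)) = sin (x - b)" unfolding y_def
    using sin_shift[of "x - b" n] by (simp add: algebra_simps)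
  have "y \<le> b - a"
  proof (rule ccontr)
    assume "\<not> y \<le> b - a"
    then have "sin (y - (b - a)) > 0" using ypi ab by (intro sin_gt_zero) auto
    then show False using sb sy2 by simp
  qed
  then show ?thesis using y0 unfolding y_def by (intro exI[of _ n]) auto
qed

lemma convex_cr_ge: "convex {x. cr a P x \<ge> 0}"
proof -
  have "{x. cr a P x \<ge> 0} = {x. inner (vector [- sin a, cos a] :: real^2) x \<ge> cos a * P$2 - sin a * P$1}"
    by (auto simp: inner2 cr_def algebra_simps)
  then show ?thesis using convex_halfspace_ge by metis
qed

lemma convex_cr_le: "convex {x. cr a P x \<le> 0}"
proof -
  have "{x. cr a P x \<le> 0} = {x. inner (vector [- sin a, cos a] :: real^2) x \<le> cos a * P$2 - sin a * P$1}"
    by (auto simp: inner2 cr_def algebra_simps)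
  then show ?thesis using convex_halfspace_le by metis
qed

lemma cr_pol: "B$1 - A$1 = d * cos p \<Longrightarrow> B$2 - A$2 = d * sin p \<Longrightarrow> cr a A B = d * sin (p - a)"
  by (simp add: cr_def sin_diff algebra_simps)
lemma dt_pol: "B$1 - A$1 = d * cos p \<Longrightarrow> B$2 - A$2 = d * sin p \<Longrightarrow> dt a A B = d * cos (p - a)"
  by (simp add: dt_def cos_diff algebra_simps)
lemma cr_base: "cr a B X = cr a A X - cr a A B" by (simp add: cr_def algebra_simps)

context ccurve begin

lemma curv_om: "t \<in> {0..1} \<Longrightarrow> curvature g t = om t / sp t"
  using om_eq[of t] sp_pos[of t] by simp

lemma cont_curv: "continuous_on {0..1} (curvature g)"
proof -
  have "continuous_on {0..1} (\<lambda>t. om t / sp t)"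
    by (intro continuous_intros cont_om cont_sp) (fastforce dest: sp_pos)
  then show ?thesis by (rule continuous_on_eq) (simp add: curv_om)
qed

lemma dG: assumes u: "u \<in> {0..1}"
  shows "((\<lambda>u. dt mid P (g u) - sin (phi u + c - mid) / K) has_real_derivative
     sp u * cos (phi u - mid) - cos (phi u + c - mid) * om u / K) (at u within {0..1})"
proof -
  have dp: "((\<lambda>u. phi u + c - mid) has_real_derivative om u + 0 - 0) (at u within {0..1})"
    by (intro DERIV_diff DERIV_add dphi[OF u] DERIV_const)
  have ds: "((\<lambda>u. sin (phi u + c - mid)) has_real_derivative cos (phi u + c - mid) * (om u + 0 - 0)) (at u within {0..1})"
    by (rule DERIV_chain2[OF DERIV_sin dp])
  show ?thesis
    using DERIV_diff[OF ddt[OF u, of mid P] DERIV_cdivide[OF ds, of K]] by simp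
qed

lemma lower_est:
  assumes M: "M > 0" "\<And>t. t \<in> {0..1} \<Longrightarrow> curvature g t \<le> M"
    and cpos: "\<And>u. u \<in> {0..1} \<Longrightarrow> cos (phi u + 2 * pi * of_int n - mid) \<ge> 0"
  shows "dt mid (g 0) (g 1) \<ge> (sin (phi 1 + 2 * pi * of_int n - mid) - sin (phi 0 + 2 * pi * of_int n - mid)) / M"
proof -
  define c where "c = 2 * pi * of_int n"
  define G where "G u = dt mid (g 0) (g u) - sin (phi u + c - mid) / M" for u
  have "G 0 \<le> G 1"
  proof (rule mono_deriv[of 0 1 "{0..1}" G "\<lambda>u. sp u * cos (phi u - mid) - cos (phi u + c - mid) * om u / M"])
    show "(G has_real_derivative sp x * cos (phi x - mid) - cos (phi x + c - mid) * om x / M) (at x within {0..1})"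
      if "x \<in> {0..1}" for x unfolding G_def[abs_def] by (rule dG[OF that])
    show "0 \<le> sp x * cos (phi x - mid) - cos (phi x + c - mid) * om x / M" if x: "x \<in> {0..1}" for x
    proof -
      have cc: "cos (phi x - mid) = cos (phi x + c - mid)"
        using cos_shift[of "phi x - mid" n] unfolding c_def by (simp add: algebra_simps)
      have "om x = curvature g x * sp x" using om_eq[OF x] .
      also have "\<dots> \<le> M * sp x" using M(2)[OF x] sp_pos[OF x] by (simp add: mult_right_mono)
      finally have "om x / M \<le> sp x" using M(1) by (simp add: divide_le_eq mult.commute)
      then have "0 \<le> cos (phi x + c - mid) * (sp x - om x / M)"
        using cpos[OF x] unfolding c_def by simp
      then show ?thesis using cc by (simp add: algebra_simps)
    qed
  qed auto
  moreover have "dt mid (g 0) (g 0) = 0" by (simp add: dt_def)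
  ultimately show ?thesis unfolding G_def c_def by (simp add: diff_divide_distrib)
qed

lemma upper_est:
  assumes m: "m > 0" "\<And>t. t \<in> {0..1} \<Longrightarrow> m \<le> curvature g t"
    and cpos: "\<And>u. u \<in> {0..1} \<Longrightarrow> cos (phi u + 2 * pi * of_int n - mid) \<ge> 0"
  shows "dt mid (g 0) (g 1) \<le> (sin (phi 1 + 2 * pi * of_int n - mid) - sin (phi 0 + 2 * pi * of_int n - mid)) / m"
proof -
  define c where "c = 2 * pi * of_int n"
  define G where "G u = dt mid (g 0) (g u) - sin (phi u + c - mid) / m" for u
  have "- G 0 \<le> - G 1"
  proof (rule mono_deriv[of 0 1 "{0..1}" "\<lambda>u. - G u" "\<lambda>u. - (sp u * cos (phi u - mid) - cos (phi u + c - mid) * om u / m)"])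
    show "((\<lambda>u. - G u) has_real_derivative - (sp x * cos (phi x - mid) - cos (phi x + c - mid) * om x / m)) (at x within {0..1})"
      if "x \<in> {0..1}" for x unfolding G_def[abs_def] by (rule DERIV_minus[OF dG[OF that]])
    show "0 \<le> - (sp x * cos (phi x - mid) - cos (phi x + c - mid) * om x / m)" if x: "x \<in> {0..1}" for x
    proof -
      have cc: "cos (phi x - mid) = cos (phi x + c - mid)"
        using cos_shift[of "phi x - mid" n] unfolding c_def by (simp add: algebra_simps)
      have "m * sp x \<le> curvature g x * sp x" using m(2)[OF x] sp_pos[OF x] by (simp add: mult_right_mono)
      also have "\<dots> = om x" using om_eq[OF x] by simp
      finally have "sp x \<le> om x / m" using m(1) by (simp add: le_divide_eq mult.commute)
      then have "0 \<le> cos (phi x + c - mid) * (om x / m - sp x)"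
        using cpos[OF x] unfolding c_def by simp
      then show ?thesis using cc by (simp add: algebra_simps)
    qed
  qed auto
  moreover have "dt mid (g 0) (g 0) = 0" by (simp add: dt_def)
  ultimately show ?thesis unfolding G_def c_def by (simp add: diff_divide_distrib)
qed

end

lemma sin_nonpos: "- pi \<le> x \<Longrightarrow> x \<le> 0 \<Longrightarrow> sin x \<le> 0"
  using sin_ge_zero[of "- x"] by simp

theorem lemma4p5:
  fixes \<gamma>1 \<gamma>2 :: "real \<Rightarrow> real^2"
  assumes "convex_curve \<gamma>1" and "convex_curve \<gamma>2"
    and "{pathstart \<gamma>1, pathfinish \<gamma>1} = {pathstart \<gamma>2, pathfinish \<gamma>2}"
    and "path_image \<gamma>1 \<subseteq> convex hull (path_image \<gamma>2)"
    and "total_curvature \<gamma>2 \<le> pi"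
  shows "(SUP t\<in>{0..1}. curvature \<gamma>2 t) \<ge> (INF s\<in>{0..1}. curvature \<gamma>1 s)"
proof -
  interpret c1: ccurve \<gamma>1 by (rule ccurve.intro) (rule assms(1))
  interpret c2: ccurve \<gamma>2 by (rule ccurve.intro) (rule assms(2))
  have I0: "(0::real) \<in> {0..1}" and I1: "(1::real) \<in> {0..1}" by auto
  define A where "A = \<gamma>2 0"
  define B where "B = \<gamma>2 1"
  have AB: "A \<noteq> B" using c2.inj[OF I0 I1] unfolding A_def B_def by auto
  define d where "d = sqrt ((B$1 - A$1)^2 + (B$2 - A$2)^2)"
  have "(B$1 - A$1)^2 + (B$2 - A$2)^2 \<noteq> 0"
  proof
    assume "(B$1 - A$1)^2 + (B$2 - A$2)^2 = 0"
    then have "B$1 = A$1" "B$2 = A$2" by (simp_all add: sum_power2_eq_zero_iff)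
    then have "B = A" by (simp add: vec_eq_iff forall_2)
    then show False using AB by simp
  qed
  then have sq: "(B$1 - A$1)^2 + (B$2 - A$2)^2 > 0" by (simp add: add_pos_nonneg less_le)
  then have dpos: "d > 0" unfolding d_def by simp
  have dsq: "d^2 = (B$1 - A$1)^2 + (B$2 - A$2)^2" unfolding d_def using sq by simp
  have "((B$1 - A$1) / d)^2 + ((B$2 - A$2) / d)^2 = ((B$1 - A$1)^2 + (B$2 - A$2)^2) / d^2"
    by (simp add: power_divide add_divide_distrib)
  also have "\<dots> = 1" using dpos by (simp add: dsq[symmetric])
  finally have "((B$1 - A$1) / d)^2 + ((B$2 - A$2) / d)^2 = 1" .
  then obtain psi0 where psi0: "(B$1 - A$1) / d = cos psi0" "(B$2 - A$2) / d = sin psi0"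
    by (rule sincos_total_2pi)
  define a0 where "a0 = c2.phi 0"
  define a1 where "a1 = c2.phi 1"
  have th_pos: "0 < a1 - a0" using c2.phi_pos unfolding a0_def a1_def .
  have th_pi: "a1 - a0 \<le> pi" using c2.phi_tc assms(5) unfolding a0_def a1_def by simp
  have p0: "B$1 - A$1 = d * cos psi0" "B$2 - A$2 = d * sin psi0" using psi0 dpos by (simp_all add: field_simps)
  have "cr a0 A B \<ge> 0" using c2.support[OF I0 I1] unfolding A_def B_def a0_def .
  then have s1: "sin (psi0 - a0) \<ge> 0" using cr_pol[OF p0] dpos by (simp add: zero_le_mult_iff)
  have "cr a1 B A \<ge> 0" using c2.support[OF I1 I0] unfolding A_def B_def a1_def .
  then have "cr a1 A B \<le> 0" using cr_swap[of a1 B A] by simp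
  then have s2: "sin (psi0 - a1) \<le> 0" using cr_pol[OF p0] dpos by (simp add: mult_le_0_iff)
  obtain n where n: "a0 \<le> psi0 + 2 * pi * of_int n" "psi0 + 2 * pi * of_int n \<le> a1"
    using angle_range[OF th_pos th_pi s1 s2] by blast
  define psi where "psi = psi0 + 2 * pi * of_int n"
  have pol: "B$1 - A$1 = d * cos psi" "B$2 - A$2 = d * sin psi"
    using p0 unfolding psi_def by (simp_all add: cos_shift sin_shift)
  have psi_rng: "a0 \<le> psi" "psi \<le> a1" using n unfolding psi_def by auto
  have crAB: "cr a A B = d * sin (psi - a)" for a using cr_pol[OF pol] .
  have dtAB: "dt a A B = d * cos (psi - a)" for a using dt_pol[OF pol] .
  have HD2: "cr psi A (\<gamma>2 u) \<le> 0" if u: "u \<in> {0..1}" for u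
  proof (cases "c2.phi u \<le> psi")
    case True
    have "- cr psi A (\<gamma>2 0) \<le> - cr psi A (\<gamma>2 u)"
    proof (rule mono_deriv[of 0 u "{0..1}" _ "\<lambda>x. - (c2.sp x * sin (c2.phi x - psi))"])
      show "((\<lambda>x. - cr psi A (\<gamma>2 x)) has_real_derivative - (c2.sp x * sin (c2.phi x - psi))) (at x within {0..1})"
        if "x \<in> {0..u}" for x using that u by (intro DERIV_minus c2.dcr) auto
      show "0 \<le> - (c2.sp x * sin (c2.phi x - psi))" if x: "x \<in> {0..u}" for x
      proof -
        have xI: "x \<in> {0..1}" using x u by auto
        have "c2.phi x \<le> c2.phi u" using c2.phi_mono[OF xI u] x by auto
        moreover have "a0 \<le> c2.phi x" using c2.phi_mono[OF I0 xI] x unfolding a0_def by auto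
        ultimately have "sin (c2.phi x - psi) \<le> 0" using True psi_rng th_pi
          by (intro sin_nonpos) auto
        then show ?thesis using c2.sp_pos[OF xI] by (simp add: mult_le_0_iff)
      qed
    qed (use u in auto)
    then show ?thesis by (simp add: A_def cr_self)
  next
    case False
    have "cr psi A (\<gamma>2 u) \<le> cr psi A (\<gamma>2 1)"
    proof (rule mono_deriv[of u 1 "{0..1}" _ "\<lambda>x. c2.sp x * sin (c2.phi x - psi)"])
      show "((\<lambda>x. cr psi A (\<gamma>2 x)) has_real_derivative c2.sp x * sin (c2.phi x - psi)) (at x within {0..1})"
        if "x \<in> {u..1}" for x using that u by (intro c2.dcr) auto
      show "0 \<le> c2.sp x * sin (c2.phi x - psi)" if x: "x \<in> {u..1}" for x
      proof -
        have xI: "x \<in> {0..1}" using x u by auto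
        have "c2.phi u \<le> c2.phi x" using c2.phi_mono[OF u xI] x by auto
        moreover have "c2.phi x \<le> a1" using c2.phi_mono[OF xI I1] x unfolding a1_def by auto
        ultimately have "sin (c2.phi x - psi) \<ge> 0" using False psi_rng th_pi
          by (intro sin_ge_zero) auto
        then show ?thesis using c2.sp_pos[OF xI] by simp
      qed
    qed (use u in auto)
    then show ?thesis using crAB[of psi] by (simp add: B_def)
  qed
  have H02: "cr a0 A (\<gamma>2 u) \<ge> 0" if u: "u \<in> {0..1}" for u
    using c2.support[OF I0 u] unfolding a0_def A_def .
  have H12: "cr a1 B (\<gamma>2 u) \<ge> 0" if u: "u \<in> {0..1}" for u
    using c2.support[OF I1 u] unfolding a1_def B_def .
  have Ih: "(1/2::real) \<in> {0..1}" by simp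
  have ph_h: "a0 < c2.phi (1/2)" "c2.phi (1/2) < a1"
    using c2.phi_strict[OF I0 Ih] c2.phi_strict[OF Ih I1] unfolding a0_def a1_def by auto
  have alpha_pos: "a0 < psi"
  proof (rule ccontr)
    assume "\<not> a0 < psi"
    then have e: "psi = a0" using psi_rng by simp
    have z: "cr psi A (\<gamma>2 u) = 0" if "u \<in> {0..1}" for u
      using HD2[OF that] H02[OF that] e by simp
    have "c2.sp (1/2) * sin (c2.phi (1/2) - psi) \<le> 0"
      by (rule min_deriv_left[OF c2.dcr[OF Ih, where a=psi and P=A]]) (use z Ih in auto)
    moreover have "sin (c2.phi (1/2) - psi) > 0" using ph_h e th_pi by (intro sin_gt_zero) auto
    ultimately show False using c2.sp_pos[OF Ih] by (simp add: mult_le_0_iff)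
  qed
  have beta_pos: "psi < a1"
  proof (rule ccontr)
    assume "\<not> psi < a1"
    then have e: "psi = a1" using psi_rng by simp
    have z: "cr psi A (\<gamma>2 u) = 0" if "u \<in> {0..1}" for u
      using HD2[OF that] H12[OF that] e cr_base[of a1 B "\<gamma>2 u" A] crAB[of a1] by simp
    have "c2.sp (1/2) * sin (c2.phi (1/2) - psi) \<ge> 0"
      by (rule min_deriv_right[OF c2.dcr[OF Ih, where a=psi and P=A]]) (use z Ih in auto)
    moreover have "sin (c2.phi (1/2) - psi) < 0"
    proof -
      have "sin (psi - c2.phi (1/2)) > 0" using ph_h e th_pi by (intro sin_gt_zero) auto
      moreover have "sin (c2.phi (1/2) - psi) = - sin (psi - c2.phi (1/2))" by (metis minus_diff_eq sin_minus)
      ultimately show ?thesis by simp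
    qed
    ultimately show False using c2.sp_pos[OF Ih] by (simp add: zero_le_mult_iff)
  qed
  have hullsub: "convex hull (path_image \<gamma>2) \<subseteq> S"
    if "convex S" "\<And>u. u \<in> {0..1} \<Longrightarrow> \<gamma>2 u \<in> S" for S
    using that by (intro hull_minimal) (auto simp: path_image_def)
  have in1: "\<gamma>1 u \<in> convex hull (path_image \<gamma>2)" if "u \<in> {0..1}" for u
    using assms(4) that unfolding path_image_def by blast
  have HD1: "cr psi A (\<gamma>1 u) \<le> 0" if u: "u \<in> {0..1}" for u
    using hullsub[OF convex_cr_le[of psi A]] HD2 in1[OF u] by blast
  have H01: "cr a0 A (\<gamma>1 u) \<ge> 0" if u: "u \<in> {0..1}" for u
    using hullsub[OF convex_cr_ge[of a0 A]] H02 in1[OF u] by blast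
  have H11: "cr a1 B (\<gamma>1 u) \<ge> 0" if u: "u \<in> {0..1}" for u
    using hullsub[OF convex_cr_ge[of a1 B]] H12 in1[OF u] by blast
  obtain t2 where t2: "t2 \<in> {0..1}" "\<And>t. t \<in> {0..1} \<Longrightarrow> curvature \<gamma>2 t \<le> curvature \<gamma>2 t2"
    using continuous_attains_sup[OF compact_Icc _ c2.cont_curv] by fastforce
  define M where "M = curvature \<gamma>2 t2"
  have Mpos: "M > 0" using c2.kpos[OF t2(1)] unfolding M_def .
  have "bdd_above (curvature \<gamma>2 ` {0..1})" using t2 by (intro bdd_aboveI[of _ "curvature \<gamma>2 t2"]) auto
  then have MS: "M \<le> (SUP t\<in>{0..1}. curvature \<gamma>2 t)" unfolding M_def using t2(1) by (rule cSUP_upper2) simp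
  define m where "m = (INF s\<in>{0..1}. curvature \<gamma>1 s)"
  have "bdd_below (curvature \<gamma>1 ` {0..1})" using c1.kpos by (intro bdd_belowI[of _ 0]) (auto intro: less_imp_le)
  then have mle: "m \<le> curvature \<gamma>1 u" if "u \<in> {0..1}" for u unfolding m_def using that by (rule cINF_lower)
  have "m \<le> M"
  proof (rule ccontr)
    assume "\<not> m \<le> M"
    then have Mm: "M < m" by simp
    then have mpos: "m > 0" using Mpos by simp
    have Ml: "curvature \<gamma>2 t \<le> M" if "t \<in> {0..1}" for t using t2(2)[OF that] unfolding M_def .
    define mid where "mid = (a0 + a1) / 2"
    define S where "S = sin ((a1 - a0) / 2)"
    have Spos: "S > 0" unfolding S_def using th_pos th_pi by (intro sin_gt_zero) auto
    have c2cos: "cos (c2.phi u + 2 * pi * of_int 0 - mid) \<ge> 0" if u: "u \<in> {0..1}" for u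
    proof -
      have "a0 \<le> c2.phi u" "c2.phi u \<le> a1"
        using c2.phi_mono[OF I0 u] c2.phi_mono[OF u I1] u unfolding a0_def a1_def by auto
      then show ?thesis unfolding mid_def using th_pi by (intro cos_ge_zero) (auto simp: field_simps)
    qed
    have low: "dt mid A B \<ge> 2 * S / M"
    proof -
      have "dt mid A B \<ge> (sin (c2.phi 1 + 2 * pi * of_int 0 - mid) - sin (c2.phi 0 + 2 * pi * of_int 0 - mid)) / M"
        using c2.lower_est[OF Mpos Ml c2cos] unfolding A_def B_def .
      also have "sin (c2.phi 1 + 2 * pi * of_int 0 - mid) = S" unfolding S_def mid_def a1_def a0_def
        by (simp add: field_simps)
      also have "sin (c2.phi 0 + 2 * pi * of_int 0 - mid) = - S"
      proof -
        have "c2.phi 0 + 2 * pi * of_int 0 - mid = - ((a1 - a0) / 2)"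
          unfolding mid_def a0_def a1_def by (simp add: field_simps)
        then show ?thesis unfolding S_def by simp
      qed
      finally show ?thesis by simp
    qed
    have ml: "m \<le> curvature \<gamma>1 t" if "t \<in> {0..1}" for t using mle[OF that] .
    have e01: "(\<gamma>1 0 = A \<and> \<gamma>1 1 = B) \<or> (\<gamma>1 0 = B \<and> \<gamma>1 1 = A)"
    proof -
      have "\<gamma>1 0 \<noteq> \<gamma>1 1" using c1.inj[OF I0 I1] by auto
      then show ?thesis using assms(3) unfolding A_def B_def pathstart_def pathfinish_def
        by (auto simp: doubleton_eq_iff)
    qed
    define b1 where "b1 = c1.phi 0"
    define b2 where "b2 = c1.phi 1"
    have T1: "0 < b2 - b1" "b2 - b1 \<le> 2 * pi" using c1.phi_pos c1.turn_le unfolding b1_def b2_def by auto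
    show False
    proof (cases "\<gamma>1 0 = A \<and> \<gamma>1 1 = B")
      case True
      then have g0: "\<gamma>1 0 = A" and g1: "\<gamma>1 1 = B" by auto
      have "c1.sp 0 * sin (c1.phi 0 - psi) \<le> 0"
        by (rule max_deriv_right[OF c1.dcr[OF I0, where a=psi and P=A]]) (use HD1 g0 cr_self in auto)
      then have q1: "sin (b1 - psi) \<le> 0" using c1.sp_pos[OF I0] unfolding b1_def by (simp add: mult_le_0_iff)
      have "c1.sp 0 * sin (c1.phi 0 - a0) \<ge> 0"
        by (rule min_deriv_right[OF c1.dcr[OF I0, where a=a0 and P=A]]) (use H01 g0 cr_self in auto)
      then have q2: "sin (b1 - a0) \<ge> 0" using c1.sp_pos[OF I0] unfolding b1_def by (simp add: zero_le_mult_iff)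
      obtain n0 where n0: "a0 \<le> b1 + 2 * pi * of_int n0" "b1 + 2 * pi * of_int n0 \<le> psi"
      proof -
        have "0 < psi - a0" "psi - a0 \<le> pi" using alpha_pos psi_rng th_pi by auto
        from angle_range[OF this q2 q1] show ?thesis using that by blast
      qed
      have "c1.sp 1 * sin (c1.phi 1 - psi) \<ge> 0"
        by (rule max_deriv_left[OF c1.dcr[OF I1, where a=psi and P=A]]) (use HD1 g1 crAB[of psi] in auto)
      then have q3: "sin (b2 - psi) \<ge> 0" using c1.sp_pos[OF I1] unfolding b2_def by (simp add: zero_le_mult_iff)
      have "c1.sp 1 * sin (c1.phi 1 - a1) \<le> 0"
        by (rule min_deriv_left[OF c1.dcr[OF I1, where a=a1 and P=B]]) (use H11 g1 cr_self in auto)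
      then have q4: "sin (b2 - a1) \<le> 0" using c1.sp_pos[OF I1] unfolding b2_def by (simp add: mult_le_0_iff)
      obtain n1 where n1: "psi \<le> b2 + 2 * pi * of_int n1" "b2 + 2 * pi * of_int n1 \<le> a1"
      proof -
        have "0 < a1 - psi" "a1 - psi \<le> pi" using beta_pos psi_rng th_pi by auto
        from angle_range[OF this q3 q4] show ?thesis using that by blast
      qed
      have "n0 = n1"
      proof (rule ccontr)
        assume ne: "n0 \<noteq> n1"
        have eq: "b2 - b1 = (b2 + 2 * pi * of_int n1) - (b1 + 2 * pi * of_int n0) + 2 * pi * of_int (n0 - n1)"
          by (simp add: algebra_simps)
        show False
        proof (cases "n0 - n1 \<ge> 1")
          case True
          then have "(1::real) \<le> of_int (n0 - n1)" by simp
          then have "2 * pi * of_int (n0 - n1) \<ge> 2 * pi * 1"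
            by (rule mult_left_mono) simp
          then have "b2 - b1 \<ge> 2 * pi" using eq n0 n1 by linarith
          then have T2: "b2 - b1 = 2 * pi" using T1 by simp
          then have "b1 + 2 * pi * of_int n0 = psi" using eq n0 n1 \<open>2 * pi * of_int (n0 - n1) \<ge> 2 * pi * 1\<close> by linarith
          then have "psi - b1 = 2 * pi * of_int n0" by simp
          then have "dt b1 A B = d" using dtAB[of b1] by simp
          moreover have "dt b1 A B \<le> 0" using c1.turn_eq T2 g0 g1 unfolding b1_def b2_def by simp
          ultimately show False using dpos by simp
        next
          case False
          then have "n0 - n1 \<le> -1" using ne by simp
          then have "of_int (n0 - n1) \<le> (-1::real)" by simp
          then have "2 * pi * of_int (n0 - n1) \<le> 2 * pi * (-1)"
            by (rule mult_left_mono) simp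
          then have "b2 - b1 < 0" using eq n0 n1 th_pi psi_rng pi_gt_zero by linarith
          then show False using T1 by simp
        qed
      qed
      have rng: "a0 \<le> c1.phi u + 2 * pi * of_int n0 \<and> c1.phi u + 2 * pi * of_int n0 \<le> a1" if u: "u \<in> {0..1}" for u
        using c1.phi_mono[OF I0 u] c1.phi_mono[OF u I1] u n0 n1 psi_rng \<open>n0 = n1\<close>
        unfolding b1_def b2_def by auto
      have c1cos: "cos (c1.phi u + 2 * pi * of_int n0 - mid) \<ge> 0" if u: "u \<in> {0..1}" for u
        using rng[OF u] th_pi unfolding mid_def by (intro cos_ge_zero) (auto simp: field_simps)
      have "dt mid A B \<le> (sin (c1.phi 1 + 2 * pi * of_int n0 - mid) - sin (c1.phi 0 + 2 * pi * of_int n0 - mid)) / m"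
        using c1.upper_est[OF mpos ml c1cos] g0 g1 by simp
      also have "\<dots> \<le> 2 * S / m"
      proof -
        have "sin (c1.phi 1 + 2 * pi * of_int n0 - mid) \<le> sin ((a1 - a0) / 2)"
          using rng[OF I1] th_pi unfolding mid_def by (intro sin_monotone_2pi_le) (auto simp: field_simps)
        moreover have "sin (- ((a1 - a0) / 2)) \<le> sin (c1.phi 0 + 2 * pi * of_int n0 - mid)"
          using rng[OF I0] th_pi unfolding mid_def by (intro sin_monotone_2pi_le) (auto simp: field_simps)
        ultimately show ?thesis using mpos unfolding S_def by (simp add: divide_right_mono)
      qed
      finally have "2 * S / M \<le> 2 * S / m" using low by linarith
      then have "m \<le> M" using Spos Mpos mpos by (simp add: divide_le_eq field_simps)
      then show False using Mm by simp
    next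
      case False
      then have g0: "\<gamma>1 0 = B" and g1: "\<gamma>1 1 = A" using e01 by auto
      have alpha_lt: "psi - a0 < pi" and beta_lt: "a1 - psi < pi" using alpha_pos beta_pos th_pi by auto
      have sa: "sin (psi - a0) > 0" using alpha_pos alpha_lt by (intro sin_gt_zero) auto
      have sb: "sin (a1 - psi) > 0" using beta_pos beta_lt by (intro sin_gt_zero) auto
      have "c1.sp 0 * sin (c1.phi 0 - psi) \<le> 0"
        by (rule max_deriv_right[OF c1.dcr[OF I0, where a=psi and P=A]]) (use HD1 g0 crAB[of psi] in auto)
      then have q1: "sin (b1 - psi) \<le> 0" using c1.sp_pos[OF I0] unfolding b1_def by (simp add: mult_le_0_iff)
      have "cr b1 B A \<ge> 0" using c1.support[OF I0 I1] g0 g1 unfolding b1_def by simp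
      then have "cr b1 A B \<le> 0" using cr_swap[of b1 B A] by simp
      then have "sin (psi - b1) \<le> 0" using crAB[of b1] dpos by (simp add: mult_le_0_iff)
      then have "sin (b1 - psi) \<ge> 0" using sin_minus[of "psi - b1"] by simp
      then have x0: "sin (b1 - psi) = 0" using q1 by simp
      have "c1.sp 0 * sin (c1.phi 0 - a1) \<ge> 0"
        by (rule min_deriv_right[OF c1.dcr[OF I0, where a=a1 and P=B]]) (use H11 g0 cr_self in auto)
      then have "sin (b1 - a1) \<ge> 0" using c1.sp_pos[OF I0] unfolding b1_def by (simp add: zero_le_mult_iff)
      moreover have "sin (b1 - a1) = sin (b1 - psi) * cos (a1 - psi) - cos (b1 - psi) * sin (a1 - psi)"
        using sin_diff[of "b1 - psi" "a1 - psi"] by simp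
      ultimately have "cos (b1 - psi) * sin (a1 - psi) \<le> 0" using x0 by simp
      then have "cos (b1 - psi) \<le> 0" using sb by (simp add: mult_le_0_iff)
      moreover have "(cos (b1 - psi))^2 = 1" using x0 sin_cos_squared_add[of "b1 - psi"] by simp
      ultimately have x1: "cos (b1 - psi) = -1" by (simp add: power2_eq_1_iff)
      have "c1.sp 1 * sin (c1.phi 1 - psi) \<ge> 0"
        by (rule max_deriv_left[OF c1.dcr[OF I1, where a=psi and P=A]]) (use HD1 g1 cr_self in auto)
      then have q3: "sin (b2 - psi) \<ge> 0" using c1.sp_pos[OF I1] unfolding b2_def by (simp add: zero_le_mult_iff)
      have "cr b2 A B \<ge> 0" using c1.support[OF I1 I0] g0 g1 unfolding b2_def by simp
      then have "sin (psi - b2) \<ge> 0" using crAB[of b2] dpos by (simp add: zero_le_mult_iff)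
      then have "sin (b2 - psi) \<le> 0" using sin_minus[of "psi - b2"] by simp
      then have y0: "sin (b2 - psi) = 0" using q3 by simp
      have "c1.sp 1 * sin (c1.phi 1 - a0) \<le> 0"
        by (rule min_deriv_left[OF c1.dcr[OF I1, where a=a0 and P=A]]) (use H01 g1 cr_self in auto)
      then have "sin (b2 - a0) \<le> 0" using c1.sp_pos[OF I1] unfolding b2_def by (simp add: mult_le_0_iff)
      moreover have "sin (b2 - a0) = sin (b2 - psi) * cos (psi - a0) + cos (b2 - psi) * sin (psi - a0)"
        using sin_add[of "b2 - psi" "psi - a0"] by simp
      ultimately have "cos (b2 - psi) * sin (psi - a0) \<le> 0" using y0 by simp
      then have "cos (b2 - psi) \<le> 0" using sa by (simp add: mult_le_0_iff)
      moreover have "(cos (b2 - psi))^2 = 1" using y0 sin_cos_squared_add[of "b2 - psi"] by simp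
      ultimately have y1: "cos (b2 - psi) = -1" by (simp add: power2_eq_1_iff)
      have "cos (b2 - b1) = cos (b2 - psi) * cos (b1 - psi) + sin (b2 - psi) * sin (b1 - psi)"
        using cos_diff[of "b2 - psi" "b1 - psi"] by simp
      then have "cos (b2 - b1) = 1" using x0 x1 y0 y1 by simp
      then obtain k :: int where k: "b2 - b1 = of_int k * 2 * pi" using cos_one_2pi_int by blast
      have "of_int k * 2 * pi > 0" using k T1 by simp
      then have "k > 0" by (simp add: zero_less_mult_iff)
      moreover have "of_int k * 2 * pi \<le> 1 * 2 * pi" using k T1 by simp
      then have "k \<le> 1" by simp
      ultimately have "k = 1" by simp
      then have T2: "b2 - b1 = 2 * pi" using k by simp
      have "dt b1 B A \<le> 0" using c1.turn_eq T2 g0 g1 unfolding b1_def b2_def by simp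
      moreover have "dt b1 B A = - (d * cos (psi - b1))" using dt_swap[of b1 B A] dtAB[of b1] by simp
      moreover have "cos (psi - b1) = -1" using x1 cos_minus[of "b1 - psi"] by simp
      ultimately show False using dpos by simp
    qed
  qed
  then show ?thesis using MS unfolding m_def by simp
qed

end
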